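(* Let $n,m\in\mathbb{Z}$ be such that $k:=\gcd(n,m)$ satisfies $|k|\ge2$. Then the group $\langle a,b\mid (ab)^n=(ba)^m\rangle$ is big.
   Context: A group is called big if it contains a non-abelian free subgroup. *)

theory Defs
  imports "HOL-Algebra.Algebra"
begin

text \<open>A letter (s, e) stands for s if e = False and for s inverse if e = True.\<close>

fun reduced_word :: "('a \<times> bool) list \<Rightarrow> bool" where
  "reduced_word (x # y # ys) =
     (\<not> (fst x = fst y \<and> snd x \<noteq> snd y) \<and> reduced_word (y # ys))"
| "reduced_word _ = True"

fun push_letter :: "('a \<times> bool) \<Rightarrow> ('a \<times> bool) list \<Rightarrow> ('a \<times> bool) list" where
  "push_letter x [] = [x]"
| "push_letter x (y # ys) =
     (if fst x = fst y \<and> snd x \<noteq> snd y then ys else x # y # ys)"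

definition word_mult :: "('a \<times> bool) list \<Rightarrow> ('a \<times> bool) list \<Rightarrow> ('a \<times> bool) list" where
  "word_mult xs ys = foldr push_letter xs ys"

definition free_group :: "('a \<times> bool) list monoid" where
  "free_group = \<lparr>carrier = {w. reduced_word w}, monoid.mult = word_mult, one = []\<rparr>"

definition gen_a :: "(bool \<times> bool) list" where "gen_a = [(False, False)]"
definition gen_b :: "(bool \<times> bool) list" where "gen_b = [(True, False)]"

definition relator :: "int \<Rightarrow> int \<Rightarrow> (bool \<times> bool) list" where
  "relator n m =
     ((gen_a \<otimes>\<^bsub>free_group\<^esub> gen_b) [^]\<^bsub>free_group\<^esub> n) \<otimes>\<^bsub>free_group\<^esub>
       inv\<^bsub>free_group\<^esub> ((gen_b \<otimes>\<^bsub>free_group\<^esub> gen_a) [^]\<^bsub>free_group\<^esub> m)"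

definition relator_closure :: "int \<Rightarrow> int \<Rightarrow> (bool \<times> bool) list set" where
  "relator_closure n m =
     generate free_group
       {g \<otimes>\<^bsub>free_group\<^esub> relator n m \<otimes>\<^bsub>free_group\<^esub> inv\<^bsub>free_group\<^esub> g | g. g \<in> carrier free_group}"

definition one_relator_group :: "int \<Rightarrow> int \<Rightarrow> (bool \<times> bool) list set monoid" where
  "one_relator_group n m = free_group Mod (relator_closure n m)"

definition eval_word :: "('a, 'b) monoid_scheme \<Rightarrow> ('a \<times> bool) list \<Rightarrow> 'a" where
  "eval_word G w =
     foldr (\<lambda>(s, e) acc. (if e then inv\<^bsub>G\<^esub> s else s) \<otimes>\<^bsub>G\<^esub> acc) w \<one>\<^bsub>G\<^esub>"

definition free_basis :: "('a, 'b) monoid_scheme \<Rightarrow> 'a set \<Rightarrow> bool" where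
  "free_basis G S \<longleftrightarrow> S \<subseteq> carrier G \<and>
     (\<forall>w. w \<noteq> [] \<and> reduced_word w \<and> fst ` set w \<subseteq> S \<longrightarrow> eval_word G w \<noteq> \<one>\<^bsub>G\<^esub>)"

definition big :: "('a, 'b) monoid_scheme \<Rightarrow> bool" where
  "big G \<longleftrightarrow> (\<exists>H S. subgroup H G \<and> H = generate G S \<and> free_basis G S \<and>
     \<not> (\<forall>x\<in>H. \<forall>y\<in>H. x \<otimes>\<^bsub>G\<^esub> y = y \<otimes>\<^bsub>G\<^esub> x))"

end

theory Submission
  imports Defs
begin


definition inv_l :: "('a \<times> bool) \<Rightarrow> ('a \<times> bool)" where "inv_l x = (fst x, \<not> snd x)"

lemma inv_l_inv_l[simp]: "inv_l (inv_l x) = x" by (simp add: inv_l_def)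
lemma inv_l_neq[simp]: "inv_l x \<noteq> x" by (cases x) (simp add: inv_l_def)

lemma push_Cons: "push_letter x (y # ys) = (if y = inv_l x then ys else x # y # ys)"
  by (cases x; cases y) (auto simp: inv_l_def)

lemma reduced_Cons2: "reduced_word (x # y # ys) = (y \<noteq> inv_l x \<and> reduced_word (y # ys))"
  by (cases x; cases y) (auto simp: inv_l_def)

declare push_letter.simps(2)[simp del] reduced_word.simps(1)[simp del]
declare push_Cons[simp] reduced_Cons2[simp]

lemma reduced_tl: "reduced_word (x # ys) \<Longrightarrow> reduced_word ys"
  by (cases ys) (auto simp: reduced_Cons2)

lemma reduced_push: "reduced_word w \<Longrightarrow> reduced_word (push_letter x w)"
  by (cases w) (auto simp: push_Cons reduced_Cons2 dest: reduced_tl)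

lemma push_cancel: "reduced_word w \<Longrightarrow> push_letter (inv_l x) (push_letter x w) = w"
proof (cases w)
  case (Cons y ys)
  assume r: "reduced_word w"
  show ?thesis
  proof (cases "y = inv_l x")
    case True
    then show ?thesis using r Cons
      by (cases ys) (auto simp: push_Cons reduced_Cons2)
  next
    case False
    then show ?thesis using Cons by (simp add: push_Cons)
  qed
qed (simp add: push_Cons)

lemma reduced_foldr: "reduced_word z \<Longrightarrow> reduced_word (foldr push_letter u z)"
  by (induction u) (auto intro: reduced_push)

lemma foldr_push_reduced: "reduced_word u \<Longrightarrow> foldr push_letter u [] = u"
proof (induction u)
  case (Cons x u)
  then show ?case using reduced_tl[OF Cons.prems]
    by (cases u) (auto simp: push_Cons reduced_Cons2)
qed simp

lemma foldr_push_step: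
  assumes "reduced_word v" "reduced_word z"
  shows "foldr push_letter (push_letter a v) z = push_letter a (foldr push_letter v z)"
proof (cases v)
  case (Cons b v')
  show ?thesis
  proof (cases "b = inv_l a")
    case True
    have "reduced_word (foldr push_letter v' z)" using assms reduced_foldr by blast
    then show ?thesis using Cons True push_cancel[of "foldr push_letter v' z" b]
      by (simp add: push_Cons)
  next
    case False
    then show ?thesis using Cons by (simp add: push_Cons)
  qed
qed simp

lemma foldr_assoc:
  assumes "reduced_word y" "reduced_word z"
  shows "foldr push_letter (foldr push_letter x y) z = foldr push_letter x (foldr push_letter y z)"
  using assms
proof (induction x)
  case (Cons a x)
  then show ?case using foldr_push_step[OF reduced_foldr[OF Cons.prems(1), of x] Cons.prems(2), of a]
    by simp
qed simp

definition winv :: "('a \<times> bool) list \<Rightarrow> ('a \<times> bool) list" where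
  "winv w = rev (map inv_l w)"

lemma reduced_snoc: "reduced_word (xs @ [a, b]) = (b \<noteq> inv_l a \<and> reduced_word (xs @ [a]))"
  by (induction xs rule: reduced_word.induct) (auto simp: reduced_Cons2)

lemma reduced_rev_aux: "reduced_word w \<Longrightarrow> reduced_word (rev (map inv_l w))"
proof (induction w rule: reduced_word.induct)
  case (1 x y ys)
  have "reduced_word (rev (map inv_l ys) @ [inv_l y, inv_l x])"
    using 1 by (simp add: reduced_Cons2 reduced_snoc) (metis inv_l_inv_l)
  then show ?case by simp
qed auto

lemma reduced_winv: "reduced_word w \<Longrightarrow> reduced_word (winv w)"
  by (simp add: winv_def reduced_rev_aux)

lemma winv_cancel: "reduced_word w \<Longrightarrow> foldr push_letter (winv w) w = []"
proof (induction w)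
  case (Cons a w)
  have "foldr push_letter (winv (a # w)) (a # w) = foldr push_letter (winv w) (push_letter (inv_l a) (a # w))"
    by (simp add: winv_def)
  also have "\<dots> = foldr push_letter (winv w) w" by (simp add: push_Cons)
  finally show ?case using Cons reduced_tl by metis
qed (simp add: winv_def)

lemma free_group_carrier[simp]: "carrier free_group = {w. reduced_word w}"
  by (simp add: free_group_def)
lemma free_group_mult[simp]: "x \<otimes>\<^bsub>free_group\<^esub> y = foldr push_letter x y"
  by (simp add: free_group_def word_mult_def)
lemma free_group_one[simp]: "\<one>\<^bsub>free_group\<^esub> = []"
  by (simp add: free_group_def)

lemma group_free_group: "group (free_group :: ('a \<times> bool) list monoid)"
proof (rule groupI)
  fix x :: "('a \<times> bool) list"
  assume "x \<in> carrier free_group"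
  then show "\<exists>y\<in>carrier free_group. y \<otimes>\<^bsub>free_group\<^esub> x = \<one>\<^bsub>free_group\<^esub>"
    by (auto intro!: bexI[of _ "winv x"] winv_cancel reduced_winv)
qed (auto intro: reduced_foldr foldr_assoc)

lemma free_inv: "reduced_word w \<Longrightarrow> inv\<^bsub>free_group\<^esub> w = winv w"
  by (rule group.inv_equality[OF group_free_group]) (auto intro: winv_cancel reduced_winv)



definition lt :: "('a, 'b) monoid_scheme \<Rightarrow> ('a \<times> bool) \<Rightarrow> 'a" where
  "lt G x = (if snd x then inv\<^bsub>G\<^esub> (fst x) else fst x)"

lemma eval_word_Nil[simp]: "eval_word G [] = \<one>\<^bsub>G\<^esub>"
  by (simp add: eval_word_def)
lemma eval_word_Cons[simp]: "eval_word G (x # w) = lt G x \<otimes>\<^bsub>G\<^esub> eval_word G w"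
  by (cases x) (simp add: eval_word_def lt_def)

lemma lt_closed: "group G \<Longrightarrow> fst x \<in> carrier G \<Longrightarrow> lt G x \<in> carrier G"
  by (simp add: lt_def group.inv_closed)

lemma eval_word_closed: "group G \<Longrightarrow> fst ` set w \<subseteq> carrier G \<Longrightarrow> eval_word G w \<in> carrier G"
  by (induction w) (auto intro!: monoid.m_closed group.is_monoid lt_closed)

lemma lt_inv_l: "group G \<Longrightarrow> fst x \<in> carrier G \<Longrightarrow> lt G x \<otimes>\<^bsub>G\<^esub> lt G (inv_l x) = \<one>\<^bsub>G\<^esub>"
  by (auto simp: lt_def inv_l_def group.r_inv group.l_inv)

definition lmap :: "('a \<Rightarrow> 'b) \<Rightarrow> ('a \<times> bool) list \<Rightarrow> ('b \<times> bool) list" where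
  "lmap f w = map (\<lambda>(s, e). (f s, e)) w"

lemma lmap_simps[simp]: "lmap f [] = []" "lmap f (x # w) = (f (fst x), snd x) # lmap f w"
  by (auto simp: lmap_def split: prod.split)
lemma lmap_set: "fst ` set (lmap f w) = f ` fst ` set w"
  by (induction w) auto
lemma lmap_id[simp]: "lmap id w = w" "lmap (\<lambda>x. x) w = w"
  by (induction w) auto
lemma lmap_comp: "lmap f (lmap g w) = lmap (f \<circ> g) w"
  by (induction w) auto
lemma lmap_cong: "(\<And>s. s \<in> fst ` set w \<Longrightarrow> f s = g s) \<Longrightarrow> lmap f w = lmap g w"
  by (induction w) auto

lemma set_push: "set (push_letter x w) \<subseteq> insert x (set w)"
  by (cases w) auto
lemma set_foldr_push: "set (foldr push_letter u v) \<subseteq> set u \<union> set v"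
  by (induction u) (use set_push in fastforce)+

lemma eval_push:
  assumes G: "group G" and x: "f (fst x) \<in> carrier G" and w: "f ` fst ` set w \<subseteq> carrier G"
  shows "eval_word G (lmap f (push_letter x w)) = lt G (f (fst x), snd x) \<otimes>\<^bsub>G\<^esub> eval_word G (lmap f w)"
proof (cases w)
  case Nil then show ?thesis using G x by (simp add: lt_closed group.is_monoid monoid.r_one)
next
  case (Cons y ys)
  have ev: "eval_word G (lmap f ys) \<in> carrier G" using w Cons
    by (intro eval_word_closed G) (auto simp: lmap_set)
  show ?thesis
  proof (cases "y = inv_l x")
    case True
    have "lt G (f (fst x), snd x) \<otimes>\<^bsub>G\<^esub> lt G (f (fst y), snd y) = \<one>\<^bsub>G\<^esub>"
      using lt_inv_l[OF G, of "(f (fst x), snd x)"] x True by (simp add: inv_l_def)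
    moreover have "lt G (f (fst x), snd x) \<in> carrier G" "lt G (f (fst y), snd y) \<in> carrier G"
      using x w Cons G by (auto intro!: lt_closed)
    ultimately show ?thesis using True Cons ev G
      by (simp add: group.is_monoid monoid.m_assoc[symmetric] monoid.l_one)
  qed (use Cons in simp)
qed

lemma eval_foldr:
  assumes G: "group G" and "f ` fst ` set u \<subseteq> carrier G" "f ` fst ` set v \<subseteq> carrier G"
  shows "eval_word G (lmap f (foldr push_letter u v)) = eval_word G (lmap f u) \<otimes>\<^bsub>G\<^esub> eval_word G (lmap f v)"
  using assms(2)
proof (induction u)
  case Nil then show ?case using G assms(3) eval_word_closed[OF G, of "lmap f v"]
    by (simp add: lmap_set group.is_monoid monoid.l_one)
next
  case (Cons x u)
  have A: "fst ` set (foldr push_letter u v) \<subseteq> fst ` set (x # u) \<union> fst ` set v"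
    using set_foldr_push[of u v] by auto
  have s: "f ` fst ` set (foldr push_letter u v) \<subseteq> carrier G"
  proof
    fix y assume "y \<in> f ` fst ` set (foldr push_letter u v)"
    then obtain z where "z \<in> fst ` set (foldr push_letter u v)" "y = f z" by blast
    then show "y \<in> carrier G" using A Cons.prems assms(3) by blast
  qed
  have "eval_word G (lmap f (foldr push_letter (x # u) v))
      = lt G (f (fst x), snd x) \<otimes>\<^bsub>G\<^esub> eval_word G (lmap f (foldr push_letter u v))"
    using eval_push[OF G _ s, of x] Cons.prems by simp
  also have "\<dots> = lt G (f (fst x), snd x) \<otimes>\<^bsub>G\<^esub> (eval_word G (lmap f u) \<otimes>\<^bsub>G\<^esub> eval_word G (lmap f v))"
    using Cons by simp
  finally show ?case using G Cons.prems assms(3)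
    by (simp add: group.is_monoid monoid.m_assoc lt_closed eval_word_closed lmap_set)
qed

lemma eval_hom:
  assumes "h \<in> hom G H" "group G" "group H" "fst ` set w \<subseteq> carrier G"
  shows "h (eval_word G w) = eval_word H (lmap h w)"
  using assms(4)
proof (induction w)
  case Nil then show ?case using assms by (simp add: hom_one)
next
  case (Cons x w)
  interpret gh: group_hom G H h using assms by (simp add: group_hom_def group_hom_axioms_def)
  show ?case using Cons by (simp add: lt_def eval_word_closed assms lt_closed)
qed

lemma lmap_push:
  assumes "inj_on f (fst ` insert x (set w))"
  shows "lmap f (push_letter x w) = push_letter (f (fst x), snd x) (lmap f w)"
proof (cases w)
  case (Cons y ys)
  have "(y = inv_l x) = ((f (fst y), snd y) = inv_l (f (fst x), snd x))"
    using assms Cons by (cases x, cases y) (auto simp: inv_l_def inj_on_def)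
  then show ?thesis using Cons by simp
qed simp

lemma lmap_foldr:
  assumes "inj_on f (fst ` (set u \<union> set v))"
  shows "lmap f (foldr push_letter u v) = foldr push_letter (lmap f u) (lmap f v)"
  using assms
proof (induction u)
  case (Cons x u)
  have "inj_on f (fst ` insert x (set (foldr push_letter u v)))"
    using Cons.prems set_foldr_push[of u v] by (auto intro: inj_on_subset)
  then show ?case using Cons by (simp add: lmap_push inj_on_subset)
qed simp

lemma reduced_lmap:
  assumes "inj_on f (fst ` set w)"
  shows "reduced_word (lmap f w) = reduced_word w"
  using assms
proof (induction w rule: reduced_word.induct)
  case (1 x y ys)
  have "(y = inv_l x) = ((f (fst y), snd y) = inv_l (f (fst x), snd x))"
    using 1 by (cases x, cases y) (auto simp: inv_l_def inj_on_def)
  then show ?case using 1 by (simp add: inj_on_subset)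
qed (auto simp: reduced_word.simps)

lemma winv_set: "fst ` set (winv w) = fst ` set w"
  by (force simp: winv_def inv_l_def)

lemma lmap_winv: "lmap f (winv w) = winv (lmap f w)"
  by (simp add: winv_def lmap_def rev_map[symmetric] inv_l_def case_prod_beta)



definition sh :: "int \<Rightarrow> int \<Rightarrow> (int \<times> bool) list \<Rightarrow> (int \<times> bool) list" where
  "sh k i w = lmap (\<lambda>s. (s + i) mod k) w"

definition rng :: "int \<Rightarrow> (int \<times> bool) list \<Rightarrow> bool" where
  "rng k w \<longleftrightarrow> fst ` set w \<subseteq> {0..<k}"

definition T :: "int \<Rightarrow> ((int \<times> bool) list \<times> int) monoid" where
  "T k = \<lparr>carrier = {(w, i). reduced_word w \<and> rng k w \<and> 0 \<le> i \<and> i < k},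
          monoid.mult = (\<lambda>(w, i) (v, j). (foldr push_letter w (sh k i v), (i + j) mod k)),
          one = ([], 0)\<rparr>"

lemma T_carrier: "x \<in> carrier (T k) \<longleftrightarrow> reduced_word (fst x) \<and> rng k (fst x) \<and> 0 \<le> snd x \<and> snd x < k"
  by (cases x) (simp add: T_def)
lemma T_mult[simp]: "(w, i) \<otimes>\<^bsub>T k\<^esub> (v, j) = (foldr push_letter w (sh k i v), (i + j) mod k)"
  by (simp add: T_def)
lemma T_one[simp]: "\<one>\<^bsub>T k\<^esub> = ([], 0)"
  by (simp add: T_def)

lemma inj_shift: "k > 0 \<Longrightarrow> inj_on (\<lambda>s::int. (s + i) mod k) {0..<k}"
proof (rule inj_onI)
  fix x y :: int assume k: "k > 0" and xy: "x \<in> {0..<k}" "y \<in> {0..<k}" "(x + i) mod k = (y + i) mod k"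
  then have "(x + i - i) mod k = (y + i - i) mod k" by (metis mod_diff_left_eq)
  then show "x = y" using xy by simp
qed

lemma rng_sh: "k > 0 \<Longrightarrow> rng k (sh k i w)"
  by (auto simp: rng_def sh_def lmap_set)

lemma rng_foldr: assumes "rng k u" "rng k v" shows "rng k (foldr push_letter u v)"
  unfolding rng_def
proof
  fix s assume "s \<in> fst ` set (foldr push_letter u v)"
  then obtain p where p: "p \<in> set (foldr push_letter u v)" "s = fst p" by blast
  then have "p \<in> set u \<or> p \<in> set v" using set_foldr_push by blast
  then show "s \<in> {0..<k}" using assms p(2) unfolding rng_def by blast
qed

lemma reduced_sh: assumes "k > 0" "rng k w" shows "reduced_word (sh k i w) = reduced_word w"
  unfolding sh_def
  by (rule reduced_lmap, rule inj_on_subset[OF inj_shift[OF assms(1)]]) (use assms(2) in \<open>simp add: rng_def\<close>)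

lemma sh_foldr: assumes "k > 0" "rng k u" "rng k v" shows
    "sh k i (foldr push_letter u v) = foldr push_letter (sh k i u) (sh k i v)"
  unfolding sh_def
  by (rule lmap_foldr, rule inj_on_subset[OF inj_shift[OF assms(1)]]) (use assms(2,3) in \<open>simp add: rng_def image_Un\<close>)

lemma sh_sh: "sh k i (sh k j w) = sh k ((i + j) mod k) w"
  unfolding sh_def lmap_comp
  by (rule lmap_cong) (simp add: mod_add_left_eq mod_add_right_eq ac_simps)

lemma sh_0: "rng k w \<Longrightarrow> sh k 0 w = w"
proof -
  assume "rng k w"
  then have "lmap (\<lambda>s. (s + 0) mod k) w = lmap id w"
    by (intro lmap_cong) (auto simp: rng_def)
  then show ?thesis by (simp add: sh_def)
qed

lemma sh_Nil[simp]: "sh k i [] = []" by (simp add: sh_def)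

lemma group_T: assumes k: "k > 0" shows "group (T k)"
proof (rule groupI)
  fix x y assume "x \<in> carrier (T k)" "y \<in> carrier (T k)"
  then show "x \<otimes>\<^bsub>T k\<^esub> y \<in> carrier (T k)" using k
    by (cases x; cases y) (auto simp: T_carrier reduced_foldr reduced_sh rng_sh rng_foldr)
next
  show "\<one>\<^bsub>T k\<^esub> \<in> carrier (T k)" using k by (simp add: T_carrier rng_def)
next
  fix x y z assume xyz: "x \<in> carrier (T k)" "y \<in> carrier (T k)" "z \<in> carrier (T k)"
  obtain w i where x: "x = (w, i)" by (cases x)
  obtain v j where y: "y = (v, j)" by (cases y)
  obtain u l where z: "z = (u, l)" by (cases z)
  have r: "reduced_word w" "rng k w" "reduced_word v" "rng k v" "reduced_word u" "rng k u"
    using xyz x y z by (auto simp: T_carrier)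
  have "foldr push_letter w (sh k i (foldr push_letter v (sh k j u)))
      = foldr push_letter w (foldr push_letter (sh k i v) (sh k ((i + j) mod k) u))"
    using sh_foldr[OF k r(4) rng_sh[OF k]] sh_sh by simp
  also have "\<dots> = foldr push_letter (foldr push_letter w (sh k i v)) (sh k ((i + j) mod k) u)"
    using r k by (simp add: foldr_assoc reduced_sh rng_sh)
  finally show "x \<otimes>\<^bsub>T k\<^esub> y \<otimes>\<^bsub>T k\<^esub> z = x \<otimes>\<^bsub>T k\<^esub> (y \<otimes>\<^bsub>T k\<^esub> z)"
    using x y z by (simp add: mod_add_left_eq mod_add_right_eq add.assoc)
next
  fix x assume "x \<in> carrier (T k)"
  then show "\<one>\<^bsub>T k\<^esub> \<otimes>\<^bsub>T k\<^esub> x = x"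
    by (cases x) (auto simp: T_carrier sh_0 foldr_push_reduced)
next
  fix x assume xc: "x \<in> carrier (T k)"
  obtain w i where x: "x = (w, i)" by (cases x)
  have r: "reduced_word w" "rng k w" "0 \<le> i" "i < k" using xc x by (auto simp: T_carrier)
  define a where "a = (k - i) mod k"
  have rw: "rng k (winv w)" using r winv_set by (metis rng_def)
  have "(sh k a (winv w), a) \<in> carrier (T k)"
    using r rw k by (simp add: T_carrier reduced_sh rng_sh reduced_winv a_def)
  moreover have "(sh k a (winv w), a) \<otimes>\<^bsub>T k\<^esub> x = \<one>\<^bsub>T k\<^esub>"
  proof -
    have "foldr push_letter (sh k a (winv w)) (sh k a w) = sh k a (foldr push_letter (winv w) w)"
      using sh_foldr[OF k rw r(2)] by simp
    also have "\<dots> = []" using winv_cancel[OF r(1)] by simp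
    finally show ?thesis using x by (simp add: a_def mod_add_left_eq)
  qed
  ultimately show "\<exists>y\<in>carrier (T k). y \<otimes>\<^bsub>T k\<^esub> x = \<one>\<^bsub>T k\<^esub>" by blast
qed



lemma conj_pow:
  fixes G (structure)
  assumes "group G" "a \<in> carrier G" "x \<in> carrier G"
  shows "(inv\<^bsub>G\<^esub> a \<otimes>\<^bsub>G\<^esub> x \<otimes>\<^bsub>G\<^esub> a) [^]\<^bsub>G\<^esub> (j::nat) = inv\<^bsub>G\<^esub> a \<otimes>\<^bsub>G\<^esub> x [^]\<^bsub>G\<^esub> j \<otimes>\<^bsub>G\<^esub> a"
proof -
  interpret group G by fact
  show ?thesis
  proof (induction j)
    case 0 then show ?case using assms by simp
  next
    case (Suc j)
    have "(inv a \<otimes> x \<otimes> a) [^] Suc j = (inv a \<otimes> x [^] j \<otimes> a) \<otimes> (inv a \<otimes> x \<otimes> a)"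
      using Suc by simp
    also have "\<dots> = inv a \<otimes> x [^] Suc j \<otimes> a"
    proof -
      have c: "\<And>y. y \<in> carrier G \<Longrightarrow> a \<otimes> (inv a \<otimes> y) = y"
        using assms by (simp add: m_assoc[symmetric])
      show ?thesis using assms by (simp add: m_assoc c)
    qed
    finally show ?case .
  qed
qed

lemma pow_dvd_one:
  fixes G (structure)
  assumes "group G" "y \<in> carrier G" "y [^]\<^bsub>G\<^esub> (nat k) = \<one>\<^bsub>G\<^esub>" "k \<ge> 0" "k dvd n"
  shows "y [^]\<^bsub>G\<^esub> (n::int) = \<one>\<^bsub>G\<^esub>"
proof -
  interpret group G by fact
  obtain t where t: "n = k * t" using assms(5) by blast
  have "y [^] k = \<one>" using assms int_pow_int[of G y "nat k"] by simp
  then show ?thesis using t int_pow_pow[OF assms(2), of k t, symmetric] by simp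
qed

definition "tA = ([(0::int, False)], 0::int)"
definition "tB = ([(0::int, True)], 1::int)"
definition "tS = ([] :: (int \<times> bool) list, 1::int)"
definition "tP = ([(1::int, False)], 0::int)"

context
  fixes k :: int
  assumes k2: "k \<ge> 2"
begin

lemma k0: "k > 0" using k2 by simp


lemma gT: "group (T k)" using group_T k0 .

lemma tA_c: "tA \<in> carrier (T k)" using k2 by (simp add: tA_def T_carrier rng_def)
lemma tB_c: "tB \<in> carrier (T k)" using k2 by (simp add: tB_def T_carrier rng_def)
lemma tS_c: "tS \<in> carrier (T k)" using k2 by (simp add: tS_def T_carrier rng_def)

lemma tAB: "tA \<otimes>\<^bsub>T k\<^esub> tB = tS"
  using k2 by (simp add: tA_def tB_def tS_def sh_def inv_l_def)

lemma tBA: "tB \<otimes>\<^bsub>T k\<^esub> tA = inv\<^bsub>T k\<^esub> tA \<otimes>\<^bsub>T k\<^esub> tS \<otimes>\<^bsub>T k\<^esub> tA"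
proof -
  interpret group "T k" by (rule gT)
  show ?thesis using tA_c tB_c by (simp add: tAB[symmetric] m_assoc[symmetric] del: T_one)
qed

lemma tS_pow: "tS [^]\<^bsub>T k\<^esub> (j::nat) = ([], int j mod k)"
proof (induction j)
  case (Suc j) then show ?case by (simp add: tS_def mod_add_right_eq ac_simps)
qed simp

lemma tS_pow_k: "tS [^]\<^bsub>T k\<^esub> (nat k) = \<one>\<^bsub>T k\<^esub>"
  using k2 by (simp add: tS_pow)

lemma tAB_pow: "k dvd n \<Longrightarrow> (tA \<otimes>\<^bsub>T k\<^esub> tB) [^]\<^bsub>T k\<^esub> (n::int) = \<one>\<^bsub>T k\<^esub>"
  unfolding tAB using pow_dvd_one[OF gT tS_c tS_pow_k] k2 by simp

lemma tBA_pow: "k dvd n \<Longrightarrow> (tB \<otimes>\<^bsub>T k\<^esub> tA) [^]\<^bsub>T k\<^esub> (n::int) = \<one>\<^bsub>T k\<^esub>"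
proof -
  interpret group "T k" by (rule gT)
  assume "k dvd n"
  have "(tB \<otimes>\<^bsub>T k\<^esub> tA) [^]\<^bsub>T k\<^esub> (nat k) = \<one>\<^bsub>T k\<^esub>"
    unfolding tBA using conj_pow[OF gT tA_c tS_c] tS_pow_k tA_c by (simp del: T_one)
  then show ?thesis using pow_dvd_one[OF gT _ _ _ \<open>k dvd n\<close>] tA_c tB_c k2 by simp
qed

lemma inv_tS: "inv\<^bsub>T k\<^esub> tS = ([], k - 1)"
proof -
  interpret group "T k" by (rule gT)
  show ?thesis
    by (rule inv_equality) (use k2 in \<open>simp_all add: tS_def T_carrier rng_def\<close>)
qed


lemma tP_eq: "tS \<otimes>\<^bsub>T k\<^esub> tA \<otimes>\<^bsub>T k\<^esub> inv\<^bsub>T k\<^esub> tS = tP"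
  using k2 by (simp add: inv_tS[unfolded tS_def] tS_def tA_def tP_def sh_def)

lemma inv_letter: "0 \<le> q \<Longrightarrow> q < k \<Longrightarrow> inv\<^bsub>T k\<^esub> ([(q, False)], 0) = ([(q, True)], 0)"
proof -
  interpret group "T k" by (rule gT)
  assume "0 \<le> q" "q < k"
  then show ?thesis
    by (intro inv_equality) (use k2 in \<open>simp_all add: T_carrier rng_def sh_def inv_l_def\<close>)
qed

lemma push_red: "reduced_word (x # w) \<Longrightarrow> push_letter x w = x # w"
  by (cases w) auto

lemma eval_T_free:
  fixes q :: "'x \<Rightarrow> int"
  assumes "inj_on q (fst ` set w)" "q ` fst ` set w \<subseteq> {0, 1}" "reduced_word w"
  shows "eval_word (T k) (lmap (\<lambda>s. ([(q s, False)], 0)) w) = (lmap q w, 0)"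
  using assms
proof (induction w)
  case Nil then show ?case by simp
next
  case (Cons x w)
  have i1: "inj_on q (fst ` set w)" using Cons.prems(1) by (rule inj_on_subset) auto
  have i2: "q ` fst ` set w \<subseteq> {0,1}" using Cons.prems(2) by auto
  have i3: "reduced_word w" using Cons.prems(3) by (rule reduced_tl)
  have IH: "eval_word (T k) (lmap (\<lambda>s. ([(q s, False)], 0)) w) = (lmap q w, 0)"
    using Cons.IH[OF i1 i2 i3] .
  have q01: "0 \<le> q (fst x)" "q (fst x) < k" using Cons.prems(2) k2 by auto
  have lt: "lt (T k) (([(q (fst x), False)], 0), snd x) = ([(q (fst x), snd x)], 0)"
    using inv_letter[OF q01] by (simp add: lt_def)
  have "{0, 1} \<subseteq> {0..<k}" using k2 by auto
  then have rng: "rng k (lmap q w)" unfolding rng_def lmap_set using i2 by (rule subset_trans[rotated])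
  have red: "reduced_word (lmap q (x # w))" using Cons.prems reduced_lmap by blast
  show ?case using IH lt sh_0[OF rng] push_red[OF red[simplified]] by simp
qed

end



abbreviation FG :: "(bool \<times> bool) list monoid" where "FG \<equiv> free_group"

declare free_group_mult[simp del] free_group_carrier[simp del] free_group_one[simp del] T_one[simp del]

definition Psi :: "int \<Rightarrow> (bool \<times> bool) list \<Rightarrow> (int \<times> bool) list \<times> int" where
  "Psi k w = eval_word (T k) (lmap (\<lambda>b. if b then tB else tA) w)"

lemma Psi_hom: assumes k2: "k \<ge> 2" shows "Psi k \<in> hom FG (T k)"
proof -
  have sub: "\<And>w. (\<lambda>b. if b then tB else tA) ` fst ` set w \<subseteq> carrier (T k)"
    using tA_c[OF k2] tB_c[OF k2] by auto
  show ?thesis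
    unfolding hom_def Psi_def
  proof (intro CollectI conjI ballI)
    show "(\<lambda>w. eval_word (T k) (lmap (\<lambda>b. if b then tB else tA) w)) \<in> carrier FG \<rightarrow> carrier (T k)"
      by (intro Pi_I eval_word_closed[OF gT[OF k2]]) (simp only: lmap_set sub)
  next
    fix x y assume "x \<in> carrier FG" "y \<in> carrier FG"
    show "eval_word (T k) (lmap (\<lambda>b. if b then tB else tA) (x \<otimes>\<^bsub>FG\<^esub> y)) =
          eval_word (T k) (lmap (\<lambda>b. if b then tB else tA) x) \<otimes>\<^bsub>T k\<^esub>
          eval_word (T k) (lmap (\<lambda>b. if b then tB else tA) y)"
      using eval_foldr[OF gT[OF k2] sub sub] by (simp add: free_group_mult)
  qed
qed

lemma Psi_gh: "k \<ge> 2 \<Longrightarrow> group_hom FG (T k) (Psi k)"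
  using Psi_hom gT group_free_group by (simp add: group_hom_def group_hom_axioms_def)

lemma Psi_a: "k \<ge> 2 \<Longrightarrow> Psi k gen_a = tA"
  using tA_c by (simp add: Psi_def gen_a_def lt_def gT group.is_monoid monoid.r_one del: T_one)
lemma Psi_b: "k \<ge> 2 \<Longrightarrow> Psi k gen_b = tB"
  using tB_c by (simp add: Psi_def gen_b_def lt_def gT group.is_monoid monoid.r_one del: T_one)

lemma gen_c: "gen_a \<in> carrier FG" "gen_b \<in> carrier FG"
  by (auto simp: gen_a_def gen_b_def reduced_word.simps free_group_carrier)

lemma relator_c: "relator n m \<in> carrier FG"
proof -
  interpret group FG by (rule group_free_group)
  show ?thesis unfolding relator_def using gen_c by simp
qed

lemma Psi_relator:
  assumes k2: "k \<ge> 2" "k dvd n" "k dvd m"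
  shows "Psi k (relator n m) = \<one>\<^bsub>T k\<^esub>"
proof -
  interpret gh: group_hom FG "T k" "Psi k" by (rule Psi_gh[OF k2(1)])
  have "Psi k (relator n m) = (tA \<otimes>\<^bsub>T k\<^esub> tB) [^]\<^bsub>T k\<^esub> n \<otimes>\<^bsub>T k\<^esub> inv\<^bsub>T k\<^esub> ((tB \<otimes>\<^bsub>T k\<^esub> tA) [^]\<^bsub>T k\<^esub> m)"
    unfolding relator_def using gen_c by (simp add: gh.hom_int_pow Psi_a Psi_b k2)
  also have "\<dots> = \<one>\<^bsub>T k\<^esub>"
    using tAB_pow[OF k2(1,2)] tBA_pow[OF k2(1,3)] by (simp add: monoid.inv_one[OF group.is_monoid[OF gT[OF k2(1)]]] group.is_monoid[OF gT[OF k2(1)]])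
  finally show ?thesis .
qed

definition "Rset n m = {g \<otimes>\<^bsub>FG\<^esub> relator n m \<otimes>\<^bsub>FG\<^esub> inv\<^bsub>FG\<^esub> g | g. g \<in> carrier FG}"

lemma Rset_sub: "Rset n m \<subseteq> carrier FG"
proof -
  interpret group FG by (rule group_free_group)
  show ?thesis using relator_c by (auto simp: Rset_def)
qed

lemma normal_N: "relator_closure n m \<lhd> FG"
proof -
  interpret group FG by (rule group_free_group)
  show ?thesis unfolding relator_closure_def
  proof (rule normal_generateI)
    show "{g \<otimes>\<^bsub>FG\<^esub> relator n m \<otimes>\<^bsub>FG\<^esub> inv\<^bsub>FG\<^esub> g | g. g \<in> carrier FG} \<subseteq> carrier FG"
      using Rset_sub unfolding Rset_def .
  next
    fix h g assume h: "h \<in> {g \<otimes>\<^bsub>FG\<^esub> relator n m \<otimes>\<^bsub>FG\<^esub> inv\<^bsub>FG\<^esub> g | g. g \<in> carrier FG}" and g: "g \<in> carrier FG"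
    then obtain g' where g': "g' \<in> carrier FG" "h = g' \<otimes>\<^bsub>FG\<^esub> relator n m \<otimes>\<^bsub>FG\<^esub> inv\<^bsub>FG\<^esub> g'" by blast
    have "g \<otimes>\<^bsub>FG\<^esub> h \<otimes>\<^bsub>FG\<^esub> inv\<^bsub>FG\<^esub> g = (g \<otimes>\<^bsub>FG\<^esub> g') \<otimes>\<^bsub>FG\<^esub> relator n m \<otimes>\<^bsub>FG\<^esub> inv\<^bsub>FG\<^esub> (g \<otimes>\<^bsub>FG\<^esub> g')"
      using g g' relator_c by (simp add: m_assoc inv_mult_group)
    then show "g \<otimes>\<^bsub>FG\<^esub> h \<otimes>\<^bsub>FG\<^esub> inv\<^bsub>FG\<^esub> g \<in> {g \<otimes>\<^bsub>FG\<^esub> relator n m \<otimes>\<^bsub>FG\<^esub> inv\<^bsub>FG\<^esub> g | g. g \<in> carrier FG}"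
      using g g' by blast
  qed
qed

lemma N_kernel:
  assumes k2: "k \<ge> 2" "k dvd n" "k dvd m"
  shows "relator_closure n m \<subseteq> kernel FG (T k) (Psi k)"
proof -
  interpret gh: group_hom FG "T k" "Psi k" by (rule Psi_gh[OF k2(1)])
  show ?thesis unfolding relator_closure_def
  proof (rule gh.G.generate_subgroup_incl[OF _ gh.subgroup_kernel])
    show "{g \<otimes>\<^bsub>FG\<^esub> relator n m \<otimes>\<^bsub>FG\<^esub> inv\<^bsub>FG\<^esub> g | g. g \<in> carrier FG} \<subseteq> kernel FG (T k) (Psi k)"
    proof
      fix x assume "x \<in> {g \<otimes>\<^bsub>FG\<^esub> relator n m \<otimes>\<^bsub>FG\<^esub> inv\<^bsub>FG\<^esub> g | g. g \<in> carrier FG}"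
      then obtain g where g: "g \<in> carrier FG" "x = g \<otimes>\<^bsub>FG\<^esub> relator n m \<otimes>\<^bsub>FG\<^esub> inv\<^bsub>FG\<^esub> g" by blast
      have "Psi k x = Psi k g \<otimes>\<^bsub>T k\<^esub> \<one>\<^bsub>T k\<^esub> \<otimes>\<^bsub>T k\<^esub> inv\<^bsub>T k\<^esub> Psi k g"
        using g relator_c Psi_relator[OF k2] by simp
      also have "\<dots> = \<one>\<^bsub>T k\<^esub>" using g by simp
      finally show "x \<in> kernel FG (T k) (Psi k)"
        using g relator_c by (simp add: kernel_def)
    qed
  qed
qed



lemma tP_c: "k \<ge> 2 \<Longrightarrow> tP \<in> carrier (T k)" by (simp add: tP_def T_carrier rng_def)

theorem mainTheorem7:
  fixes n m :: int
  assumes "\<bar>gcd n m\<bar> \<ge> 2"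
  shows "big (one_relator_group n m)"
proof -
  define k where "k = gcd n m"
  have k2: "k \<ge> 2" using assms by (simp add: k_def)
  have kn: "k dvd n" "k dvd m" by (simp_all add: k_def)
  define N where "N = relator_closure n m"
  define G where "G = one_relator_group n m"
  have G_def': "G = FG Mod N" by (simp add: G_def N_def one_relator_group_def)
  interpret nN: normal N FG using normal_N N_def by simp
  have gF: "group FG" by (rule group_free_group)
  interpret gFI: group FG by (rule gF)
  have gG: "group G" unfolding G_def' by (rule nN.factorgroup_is_group)
  have rhom: "(\<lambda>a. N #>\<^bsub>FG\<^esub> a) \<in> hom FG G" unfolding G_def' by (rule nN.r_coset_hom_Mod)
  interpret gh: group_hom FG "T k" "Psi k" by (rule Psi_gh[OF k2])
  have gTk: "group (T k)" by (rule gT[OF k2])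
  have NK: "N \<subseteq> kernel FG (T k) (Psi k)" using N_kernel[OF k2 kn] N_def by simp
  have oneG: "\<one>\<^bsub>G\<^esub> = N" by (simp add: G_def' FactGroup_def)
  have key: "Psi k e = \<one>\<^bsub>T k\<^esub>" if e: "e \<in> carrier FG" "N #>\<^bsub>FG\<^esub> e = N" for e
  proof -
    have "e \<in> N" using group.coset_join1[OF gF e(2) e(1) nN.subgroup_axioms] .
    then show ?thesis using NK by (auto simp: kernel_def)
  qed
  define c where "c = gen_a \<otimes>\<^bsub>FG\<^esub> gen_b"
  define xa where "xa = gen_a"
  define ya where "ya = c \<otimes>\<^bsub>FG\<^esub> gen_a \<otimes>\<^bsub>FG\<^esub> inv\<^bsub>FG\<^esub> c"
  have cc: "c \<in> carrier FG" "xa \<in> carrier FG" "ya \<in> carrier FG"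
    using gen_c by (simp_all add: c_def xa_def ya_def)
  have Pxa: "Psi k xa = tA" using Psi_a[OF k2] xa_def by simp
  have Pc: "Psi k c = tS" using gen_c by (simp add: c_def Psi_a[OF k2] Psi_b[OF k2] tAB[OF k2])
  have Pya: "Psi k ya = tP" using gen_c cc by (simp add: ya_def Pc Psi_a[OF k2] tP_eq[OF k2])
  define Xg where "Xg = N #>\<^bsub>FG\<^esub> xa"
  define Yg where "Yg = N #>\<^bsub>FG\<^esub> ya"
  have XG: "Xg \<in> carrier G" "Yg \<in> carrier G" using rhom cc by (auto simp: hom_def Pi_def Xg_def Yg_def)
  have XY: "Xg \<noteq> Yg"
  proof
    assume "Xg = Yg"
    have "xa \<in> N #>\<^bsub>FG\<^esub> ya" using group.rcos_self[OF gF cc(2) nN.subgroup_axioms] \<open>Xg = Yg\<close>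
      by (simp add: Xg_def Yg_def)
    then have "xa \<otimes>\<^bsub>FG\<^esub> inv\<^bsub>FG\<^esub> ya \<in> N" using subgroup.rcos_module_imp[OF nN.subgroup_axioms gF cc(3)] by simp
    then have "Psi k (xa \<otimes>\<^bsub>FG\<^esub> inv\<^bsub>FG\<^esub> ya) = \<one>\<^bsub>T k\<^esub>" using NK by (auto simp: kernel_def)
    then have "tA \<otimes>\<^bsub>T k\<^esub> inv\<^bsub>T k\<^esub> tP = \<one>\<^bsub>T k\<^esub>" using cc Pxa Pya by simp
    then have "inv\<^bsub>T k\<^esub> (inv\<^bsub>T k\<^esub> tP) = tA"
      using group.inv_equality[OF gTk] tA_c[OF k2] tP_c[OF k2] group.inv_closed[OF gTk] by blast
    then have "tP = tA" using group.inv_inv[OF gTk tP_c[OF k2]] by simp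
    then show False using k2 by (simp add: tA_def tP_def)
  qed
  define q where "q = (\<lambda>s. if s = Xg then (0::int) else 1)"
  define lift where "lift = (\<lambda>s. if s = Xg then xa else ya)"
  have free: "\<forall>w. w \<noteq> [] \<and> reduced_word w \<and> fst ` set w \<subseteq> {Xg, Yg} \<longrightarrow> eval_word G w \<noteq> \<one>\<^bsub>G\<^esub>"
  proof (intro allI impI)
    fix w assume w: "w \<noteq> [] \<and> reduced_word w \<and> fst ` set w \<subseteq> {Xg, Yg}"
    let ?w' = "lmap lift w"
    have "lift ` fst ` set w \<subseteq> lift ` {Xg, Yg}" using w by (intro image_mono) simp
    also have "\<dots> \<subseteq> {xa, ya}" by (auto simp: lift_def)
    also have "\<dots> \<subseteq> carrier FG" using cc by simp
    finally have wc: "fst ` set ?w' \<subseteq> carrier FG" by (simp add: lmap_set)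
    have e1: "lmap (\<lambda>a. N #>\<^bsub>FG\<^esub> a) ?w' = w"
    proof -
      have "lmap ((\<lambda>a. N #>\<^bsub>FG\<^esub> a) \<circ> lift) w = lmap (\<lambda>x. x) w"
      proof (rule lmap_cong)
        fix s assume "s \<in> fst ` set w"
        then have "s = Xg \<or> s = Yg" using w by blast
        then show "((\<lambda>a. N #>\<^bsub>FG\<^esub> a) \<circ> lift) s = s"
          using XY by (cases "s = Xg") (simp_all add: lift_def Xg_def Yg_def)
      qed
      then show ?thesis by (simp add: lmap_comp)
    qed
    have e2: "N #>\<^bsub>FG\<^esub> eval_word FG ?w' = eval_word G w"
      using eval_hom[OF rhom gF gG wc] e1 by simp
    have e3: "Psi k (eval_word FG ?w') = eval_word (T k) (lmap (\<lambda>s. ([(q s, False)], 0)) w)"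
    proof -
      have "lmap (Psi k \<circ> lift) w = lmap (\<lambda>s. ([(q s, False)], 0)) w"
      proof (rule lmap_cong)
        fix s assume "s \<in> fst ` set w"
        then have "s = Xg \<or> s = Yg" using w by blast
        then show "(Psi k \<circ> lift) s = ([(q s, False)], 0)"
          using XY by (cases "s = Xg") (simp_all add: lift_def q_def Pxa Pya tA_def tP_def)
      qed
      then show ?thesis using eval_hom[OF Psi_hom[OF k2] gF gTk wc] by (simp add: lmap_comp)
    qed
    have inj: "inj_on q (fst ` set w)"
    proof (rule inj_on_subset[of _ "{Xg, Yg}"])
      show "inj_on q {Xg, Yg}" using XY by (simp add: q_def)
    qed (use w in blast)
    have "q ` fst ` set w \<subseteq> {0, 1}" by (auto simp: q_def)
    then have e4: "eval_word (T k) (lmap (\<lambda>s. ([(q s, False)], 0)) w) = (lmap q w, 0)"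
      using eval_T_free[OF k2 inj] w by blast
    show "eval_word G w \<noteq> \<one>\<^bsub>G\<^esub>"
    proof
      assume "eval_word G w = \<one>\<^bsub>G\<^esub>"
      then have "N #>\<^bsub>FG\<^esub> eval_word FG ?w' = N" using e2 oneG by simp
      then have "Psi k (eval_word FG ?w') = \<one>\<^bsub>T k\<^esub>" using key eval_word_closed[OF gF wc] by blast
      then have "lmap q w = []" using e3 e4 by (simp add: T_one)
      then show False using w by (cases w) auto
    qed
  qed
  have noncomm: "Xg \<otimes>\<^bsub>G\<^esub> Yg \<noteq> Yg \<otimes>\<^bsub>G\<^esub> Xg"
  proof
    assume comm: "Xg \<otimes>\<^bsub>G\<^esub> Yg = Yg \<otimes>\<^bsub>G\<^esub> Xg"
    define w0 where "w0 = [(Xg, False), (Yg, False), (Xg, True), (Yg, True)]"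
    have "w0 \<noteq> [] \<and> reduced_word w0 \<and> fst ` set w0 \<subseteq> {Xg, Yg}"
      using XY by (simp add: w0_def inv_l_def reduced_word.simps)
    then have "eval_word G w0 \<noteq> \<one>\<^bsub>G\<^esub>" using free by blast
    moreover have "eval_word G w0 = \<one>\<^bsub>G\<^esub>"
    proof -
      interpret gG: group G by (rule gG)
      have "eval_word G w0 = Xg \<otimes>\<^bsub>G\<^esub> Yg \<otimes>\<^bsub>G\<^esub> inv\<^bsub>G\<^esub> Xg \<otimes>\<^bsub>G\<^esub> inv\<^bsub>G\<^esub> Yg"
        using XG by (simp add: w0_def lt_def gG.m_assoc)
      also have "\<dots> = Yg \<otimes>\<^bsub>G\<^esub> (Xg \<otimes>\<^bsub>G\<^esub> inv\<^bsub>G\<^esub> Xg) \<otimes>\<^bsub>G\<^esub> inv\<^bsub>G\<^esub> Yg"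
        using XG comm by (simp add: gG.m_assoc)
      also have "\<dots> = \<one>\<^bsub>G\<^esub>" using XG by simp
      finally show ?thesis .
    qed
    ultimately show False by contradiction
  qed
  have sub: "{Xg, Yg} \<subseteq> carrier G" using XG by simp
  have inH: "Xg \<in> generate G {Xg, Yg}" "Yg \<in> generate G {Xg, Yg}" by (auto intro: generate.incl)
  show ?thesis unfolding G_def[symmetric] big_def
  proof (intro exI conjI)
    show "subgroup (generate G {Xg, Yg}) G" by (rule group.generate_is_subgroup[OF gG sub])
    show "generate G {Xg, Yg} = generate G {Xg, Yg}" ..
    show "free_basis G {Xg, Yg}" unfolding free_basis_def using sub free by blast
    show "\<not> (\<forall>x\<in>generate G {Xg, Yg}. \<forall>y\<in>generate G {Xg, Yg}. x \<otimes>\<^bsub>G\<^esub> y = y \<otimes>\<^bsub>G\<^esub> x)"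
      using inH noncomm by blast
  qed
qed

end
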